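(* For every $b\ge1$ and $u\in\mathbb{D}\setminus\{0\}$, $$F_b(u)=\int_u^{U^-}\left(\frac{\mathbf{1}_{\{b=1\}}}{1-z}+bE_{b-1}(z)\mathbf{1}_{\{b\ge2\}}-\left(b(1+\rho+s)-z\right)E_b(q)\right)\frac{R(z)^bz^{b-1}}{u^bP(u)R(u)^b}\,dz.$$
   Context: Queueing model: an $M^{[X]}/M/1$ processor-sharing queue with Poisson batch arrivals of rate $\rho>0$, exponential job services of mean $1$, unit capacity shared equally among jobs present, all random quantities independent; geometric batch sizes $\mathbb{P}(B=b)=(1-q)q^{b-1}$, $q\in(0,1)$, $\rho+q<1$. For $n\ge0,b\ge1$, $\Omega_{n,b}$ is the sojourn time of a tagged batch (arrival to departure of its last job) given $n$ jobs present at its arrival and batch size $b$; $e^*_{n,b}(s)=\mathbb{E}(e^{-s\Omega_{n,b}})$ with $s>0$ fixed and suppressed. $\mathbb{D}$ is the open unit disk. For $b\ge1$, $E_b(u)=\sum_{n\ge0}e^*_{n,b}(s)u^n$ and $F_b(u)=\frac{E_b(u)-E_b(q)}{u-q}$ for $u\ne q$, $F_b(q)=E_b'(q)$. $P(u)=u^2-(s+1+\rho+q)u+sq+\rho+q$ with roots $U^-,U^+$, $q<U^-<1<U^+$. $C^+=-\frac{U^--q}{U^+-U^-}$, $C^-=1-C^+$, $R(t)=(1-t/U^-)^{C^--1}(1-t/U^+)^{C^+-1}$. The integral is along a path from $u$ to $U^-$ in $\mathbb{D}$ on which $z\mapsto R(z)/R(u)$ is analytic. *)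

theory Defs
  imports "HOL-Complex_Analysis.Complex_Analysis"
begin

text \<open>First-step (Kolmogorov backward) equations for the Laplace transform
  f n b = E exp(-s Omega_{n,b}) of the sojourn time of a tagged batch in the
  M^[X]/M/1 processor-sharing queue with geometric batches
  P(B = k+1) = (1-q) q^k.  State (n,b): n non-tagged jobs, b tagged jobs left.
  Total event rate rho + 1 (arrival of a batch / completion of some job, the
  completing job being tagged with probability b/(n+b)).\<close>
definition ps_first_step :: "real \<Rightarrow> real \<Rightarrow> real \<Rightarrow> (nat \<Rightarrow> nat \<Rightarrow> real) \<Rightarrow> bool" where
  "ps_first_step \<rho> q s f \<longleftrightarrow>
     (\<forall>n. f n 0 = 1) \<and>
     (\<forall>n b. 1 \<le> b \<longrightarrow>
        (s + \<rho> + 1) * f n b =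
          \<rho> * (\<Sum>k. (1 - q) * q ^ k * f (n + k + 1) b)
          + (real b / real (n + b)) * f n (b - 1)
          + (real n / real (n + b)) * f (n - 1) b)"

definition estar :: "real \<Rightarrow> real \<Rightarrow> real \<Rightarrow> nat \<Rightarrow> nat \<Rightarrow> real" where
  "estar \<rho> q s = (THE f. ps_first_step \<rho> q s f \<and> (\<exists>M. \<forall>n b. \<bar>f n b\<bar> \<le> M))"

definition EE :: "real \<Rightarrow> real \<Rightarrow> real \<Rightarrow> nat \<Rightarrow> complex \<Rightarrow> complex" where
  "EE \<rho> q s b u = (\<Sum>n. complex_of_real (estar \<rho> q s n b) * u ^ n)"

definition FF :: "real \<Rightarrow> real \<Rightarrow> real \<Rightarrow> nat \<Rightarrow> complex \<Rightarrow> complex" where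
  "FF \<rho> q s b u =
     (if u = complex_of_real q then deriv (EE \<rho> q s b) (complex_of_real q)
      else (EE \<rho> q s b u - EE \<rho> q s b (complex_of_real q)) / (u - complex_of_real q))"

definition PP :: "real \<Rightarrow> real \<Rightarrow> real \<Rightarrow> complex \<Rightarrow> complex" where
  "PP \<rho> q s u = u ^ 2 - complex_of_real (s + 1 + \<rho> + q) * u + complex_of_real (s * q + \<rho> + q)"

definition Um :: "real \<Rightarrow> real \<Rightarrow> real \<Rightarrow> real" where
  "Um \<rho> q s = ((s + 1 + \<rho> + q) - sqrt ((s + 1 + \<rho> + q)^2 - 4 * (s * q + \<rho> + q))) / 2"

definition Up :: "real \<Rightarrow> real \<Rightarrow> real \<Rightarrow> real" where
  "Up \<rho> q s = ((s + 1 + \<rho> + q) + sqrt ((s + 1 + \<rho> + q)^2 - 4 * (s * q + \<rho> + q))) / 2"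

definition Cplus :: "real \<Rightarrow> real \<Rightarrow> real \<Rightarrow> real" where
  "Cplus \<rho> q s = - (Um \<rho> q s - q) / (Up \<rho> q s - Um \<rho> q s)"

definition Cminus :: "real \<Rightarrow> real \<Rightarrow> real \<Rightarrow> real" where
  "Cminus \<rho> q s = 1 - Cplus \<rho> q s"

text \<open>(R(gamma t)/R(u))^b continued along the path gamma, where L is a continuous
  branch of log(1 - gamma t / U^-) on [0,1) (the factor 1 - z/U^+ has positive
  real part on the unit disk, so the principal logarithm is used there).\<close>
definition Rratio_pow :: "real \<Rightarrow> real \<Rightarrow> real \<Rightarrow> nat \<Rightarrow> (real \<Rightarrow> complex) \<Rightarrow> (real \<Rightarrow> complex) \<Rightarrow> real \<Rightarrow> complex" where
  "Rratio_pow \<rho> q s b \<gamma> L t =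
     exp (of_nat b * (complex_of_real (Cminus \<rho> q s - 1) * (L t - L 0)
        + complex_of_real (Cplus \<rho> q s - 1) *
            (Ln (1 - \<gamma> t / complex_of_real (Up \<rho> q s)) - Ln (1 - \<gamma> 0 / complex_of_real (Up \<rho> q s)))))"

end

theory Submission
  imports Defs
begin


definition Top :: "real \<Rightarrow> real \<Rightarrow> real \<Rightarrow> (nat\<Rightarrow>nat\<Rightarrow>real) \<Rightarrow> nat\<Rightarrow>nat\<Rightarrow>real" where
"Top \<rho> q s f n b = (if b = 0 then 1 else (\<rho> * (\<Sum>k. (1-q)*q^k * f (n+k+1) b) + real b/real(n+b) * f n (b-1) + real n/real(n+b) * f (n-1) b) / (s+\<rho>+1))"

lemma geo_wsum:
  fixes q \<delta> :: real and d :: "nat \<Rightarrow> real"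
  assumes "0 < q" "q < 1" "\<And>k. \<bar>d k\<bar> \<le> \<delta>"
  shows "summable (\<lambda>k. (1-q)*q^k*d k)" "\<bar>\<Sum>k. (1-q)*q^k*d k\<bar> \<le> \<delta>"
proof -
  have g: "(\<lambda>k. (1-q)*q^k*\<delta>) sums ((1-q)*(1/(1-q))*\<delta>)"
    using geometric_sums[of q] assms by (intro sums_mult sums_mult2) auto
  hence g': "(\<lambda>k. (1-q)*q^k*\<delta>) sums \<delta>" using assms by simp
  have le: "\<And>k. norm ((1-q)*q^k*d k) \<le> (1-q)*q^k*\<delta>"
    using assms by (auto simp: abs_mult intro!: mult_left_mono)
  show s: "summable (\<lambda>k. (1-q)*q^k*d k)"
    by (rule summable_comparison_test[OF _ sums_summable[OF g']]) (use le in auto)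
  have "summable (\<lambda>k. \<bar>(1-q)*q^k*d k\<bar>)"
    by (rule summable_comparison_test[OF _ sums_summable[OF g']]) (use le in auto)
  hence "\<bar>\<Sum>k. (1-q)*q^k*d k\<bar> \<le> (\<Sum>k. \<bar>(1-q)*q^k*d k\<bar>)" by (rule summable_rabs)
  also have "\<dots> \<le> (\<Sum>k. (1-q)*q^k*\<delta>)"
    by (rule suminf_le) (use le sums_summable[OF g'] \<open>summable (\<lambda>k. \<bar>(1-q)*q^k*d k\<bar>)\<close> in auto)
  also have "\<dots> = \<delta>" using g' sums_unique by metis
  finally show "\<bar>\<Sum>k. (1-q)*q^k*d k\<bar> \<le> \<delta>" .
qed

lemma Top_lip:
  fixes \<rho> q s \<delta> :: real
  assumes "\<rho> > 0" "0 < q" "q < 1" "s > 0"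
    and f: "\<And>n b. \<bar>f n b\<bar> \<le> Mf" and g: "\<And>n b. \<bar>g n b\<bar> \<le> Mg"
    and d: "\<And>n b. \<bar>f n b - g n b\<bar> \<le> \<delta>"
  shows "\<bar>Top \<rho> q s f n b - Top \<rho> q s g n b\<bar> \<le> (\<rho>+1)/(s+\<rho>+1) * \<delta>"
proof (cases "b = 0")
  case True
  have "0 \<le> \<delta>" using d[of 0 0] by simp
  with True assms show ?thesis by (simp add: Top_def)
next
  case False
  have sf: "summable (\<lambda>k. (1-q)*q^k*f (n+k+1) b)" using geo_wsum(1)[OF assms(2,3) f] .
  have sg: "summable (\<lambda>k. (1-q)*q^k*g (n+k+1) b)" using geo_wsum(1)[OF assms(2,3) g] .
  have "(\<Sum>k. (1-q)*q^k*f (n+k+1) b) - (\<Sum>k. (1-q)*q^k*g (n+k+1) b)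
      = (\<Sum>k. (1-q)*q^k*(f (n+k+1) b - g (n+k+1) b))"
    using suminf_diff[OF sf sg] by (simp add: algebra_simps)
  hence S: "\<bar>(\<Sum>k. (1-q)*q^k*f (n+k+1) b) - (\<Sum>k. (1-q)*q^k*g (n+k+1) b)\<bar> \<le> \<delta>"
    using geo_wsum(2)[OF assms(2,3), of "\<lambda>k. f (n+k+1) b - g (n+k+1) b" \<delta>] d by simp
  define w1 where "w1 = real b/real(n+b)"
  define w2 where "w2 = real n/real(n+b)"
  have pos: "real (n+b) > 0" using False by simp
  have w: "w1 \<ge> 0" "w2 \<ge> 0" "w1 + w2 = 1" using pos by (auto simp: w1_def w2_def add_divide_distrib[symmetric])
  have num: "\<bar>(\<rho> * (\<Sum>k. (1-q)*q^k*f (n+k+1) b) + w1 * f n (b-1) + w2 * f (n-1) b)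
      - (\<rho> * (\<Sum>k. (1-q)*q^k*g (n+k+1) b) + w1 * g n (b-1) + w2 * g (n-1) b)\<bar> \<le> (\<rho>+1)*\<delta>"
  proof -
    have "\<bar>(\<rho> * (\<Sum>k. (1-q)*q^k*f (n+k+1) b) + w1 * f n (b-1) + w2 * f (n-1) b)
      - (\<rho> * (\<Sum>k. (1-q)*q^k*g (n+k+1) b) + w1 * g n (b-1) + w2 * g (n-1) b)\<bar>
      = \<bar>\<rho> * ((\<Sum>k. (1-q)*q^k*f (n+k+1) b) - (\<Sum>k. (1-q)*q^k*g (n+k+1) b))
         + w1 * (f n (b-1) - g n (b-1)) + w2 * (f (n-1) b - g (n-1) b)\<bar>"
      by (simp add: algebra_simps)
    also have "\<dots> \<le> \<rho> * \<delta> + w1 * \<delta> + w2 * \<delta>"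
    proof -
      have a: "\<bar>\<rho> * ((\<Sum>k. (1-q)*q^k*f (n+k+1) b) - (\<Sum>k. (1-q)*q^k*g (n+k+1) b))\<bar> \<le> \<rho>*\<delta>"
        using S assms(1) by (simp add: abs_mult mult_left_mono)
      have b: "\<bar>w1 * (f n (b-1) - g n (b-1))\<bar> \<le> w1 * \<delta>"
        using d w by (simp add: abs_mult mult_left_mono)
      have c: "\<bar>w2 * (f (n-1) b - g (n-1) b)\<bar> \<le> w2 * \<delta>"
        using d w by (simp add: abs_mult mult_left_mono)
      show ?thesis using a b c abs_triangle_ineq[of "\<rho> * ((\<Sum>k. (1-q)*q^k*f (n+k+1) b) - (\<Sum>k. (1-q)*q^k*g (n+k+1) b))
         + w1 * (f n (b-1) - g n (b-1))" "w2 * (f (n-1) b - g (n-1) b)"]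
        abs_triangle_ineq[of "\<rho> * ((\<Sum>k. (1-q)*q^k*f (n+k+1) b) - (\<Sum>k. (1-q)*q^k*g (n+k+1) b))"
          "w1 * (f n (b-1) - g n (b-1))"] by linarith
    qed
    also have "\<dots> = (\<rho>+1)*\<delta>" using w by (simp add: algebra_simps) (metis distrib_left mult.right_neutral)
    finally show ?thesis .
  qed
  have "Top \<rho> q s f n b - Top \<rho> q s g n b =
     ((\<rho> * (\<Sum>k. (1-q)*q^k*f (n+k+1) b) + w1 * f n (b-1) + w2 * f (n-1) b)
      - (\<rho> * (\<Sum>k. (1-q)*q^k*g (n+k+1) b) + w1 * g n (b-1) + w2 * g (n-1) b)) / (s+\<rho>+1)"
    using False by (simp add: Top_def w1_def w2_def diff_divide_distrib)
  hence "\<bar>Top \<rho> q s f n b - Top \<rho> q s g n b\<bar> \<le> (\<rho>+1)*\<delta> / (s+\<rho>+1)"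
    using num assms by (simp add: divide_right_mono)
  thus ?thesis by simp
qed

lemma Top_bound1:
  fixes \<rho> q s :: real
  assumes "\<rho> > 0" "0 < q" "q < 1" "s > 0" and f: "\<And>n b. \<bar>f n b\<bar> \<le> 1"
  shows "\<bar>Top \<rho> q s f n b\<bar> \<le> 1"
proof -
  have "\<bar>Top \<rho> q s f n b - Top \<rho> q s (\<lambda>_ _. 0) n b\<bar> \<le> (\<rho>+1)/(s+\<rho>+1) * 1"
    by (rule Top_lip[OF assms(1-4), where Mf=1 and Mg=0 and g="\<lambda>_ _. 0"]) (use f in auto)
  moreover have "(\<rho>+1)/(s+\<rho>+1) \<le> 1" using assms by simp
  moreover have "Top \<rho> q s (\<lambda>_ _. 0) n b = (if b = 0 then 1 else 0)" by (simp add: Top_def)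
  ultimately show ?thesis by (cases "b = 0") (auto simp: Top_def)
qed

lemma pow_zero_lemma:
  fixes x C \<theta> :: real
  assumes "0 \<le> \<theta>" "\<theta> < 1" "\<And>k. \<bar>x\<bar> \<le> C * \<theta>^k"
  shows "x = 0"
proof (rule ccontr)
  assume "x \<noteq> 0"
  hence "\<bar>x\<bar> > 0" by simp
  have C: "C > 0" using assms(3)[of 0] \<open>\<bar>x\<bar> > 0\<close> by simp
  obtain k where "\<theta>^k < \<bar>x\<bar>/C" using real_arch_pow_inv[of "\<bar>x\<bar>/C" \<theta>] \<open>\<bar>x\<bar> > 0\<close> C assms by auto
  hence "C * \<theta>^k < \<bar>x\<bar>" using C by (simp add: field_simps)
  with assms(3)[of k] show False by simp
qed

definition fit :: "real \<Rightarrow> real \<Rightarrow> real \<Rightarrow> nat \<Rightarrow> nat \<Rightarrow> nat \<Rightarrow> real" where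
  "fit \<rho> q s k = (Top \<rho> q s ^^ k) (\<lambda>_ _. 1)"

lemma fixed_point_exists:
  fixes \<rho> q s :: real
  assumes "\<rho> > 0" "0 < q" "q < 1" "s > 0"
  shows "\<exists>f. (\<forall>n b. Top \<rho> q s f n b = f n b) \<and> (\<forall>n b. \<bar>f n b\<bar> \<le> 1)"
proof -
  define \<theta> where "\<theta> = (\<rho>+1)/(s+\<rho>+1)"
  have th: "0 \<le> \<theta>" "\<theta> < 1" using assms by (auto simp: \<theta>_def)
  define F where "F = fit \<rho> q s"
  have Fs: "F (Suc k) = Top \<rho> q s (F k)" for k by (simp add: F_def fit_def)
  have B: "\<bar>F k n b\<bar> \<le> 1" for k n b
  proof (induction k arbitrary: n b)
    case 0 then show ?case by (simp add: F_def fit_def)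
  next
    case (Suc k) then show ?case unfolding Fs by (intro Top_bound1[OF assms]) auto
  qed
  have D: "\<bar>F (Suc k) n b - F k n b\<bar> \<le> 2 * \<theta>^k" for k n b
  proof (induction k arbitrary: n b)
    case 0 then show ?case using B[of 1 n b] B[of 0 n b] by simp
  next
    case (Suc k)
    have "\<bar>Top \<rho> q s (F (Suc k)) n b - Top \<rho> q s (F k) n b\<bar> \<le> \<theta> * (2 * \<theta>^k)"
      unfolding \<theta>_def by (rule Top_lip[OF assms B B Suc.IH[unfolded \<theta>_def]])
    hence "\<bar>F (Suc (Suc k)) n b - F (Suc k) n b\<bar> \<le> \<theta> * (2 * \<theta>^k)"
      by (simp only: Fs)
    then show ?case by (simp add: algebra_simps)
  qed
  have alg: "2*x*y + 2*x*(1-y)/(1-\<theta>) = 2*x*(1-\<theta>*y)/(1-\<theta>)" for x y :: real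
  proof -
    have "1 - \<theta> \<noteq> 0" using th by simp
    then show ?thesis by (simp add: field_simps)
  qed
  have D2: "\<bar>F (k+j) n b - F k n b\<bar> \<le> 2 * \<theta>^k * (1 - \<theta>^j) / (1-\<theta>)" for k j n b
  proof (induction j)
    case 0 then show ?case by simp
  next
    case (Suc j)
    have "\<bar>F (Suc (k+j)) n b - F k n b\<bar> \<le> \<bar>F (Suc (k+j)) n b - F (k+j) n b\<bar> + \<bar>F (k+j) n b - F k n b\<bar>"
      by arith
    also have "\<dots> \<le> 2 * \<theta>^(k+j) + 2 * \<theta>^k * (1 - \<theta>^j) / (1-\<theta>)"
      using D[of "k+j" n b] Suc by (rule add_mono)
    also have "\<dots> = 2 * \<theta>^k * (1 - \<theta>^Suc j) / (1-\<theta>)"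
      using alg[of "\<theta>^k" "\<theta>^j"] by (simp add: power_add)
    finally show ?case by simp
  qed
  have D3: "\<bar>F m n b - F k n b\<bar> \<le> 2 * \<theta>^k / (1-\<theta>)" if "k \<le> m" for k m n b
  proof -
    define j where "j = m - k"
    have m: "m = k + j" using that by (simp add: j_def)
    have h1: "0 \<le> \<theta>^j" using th(1) by (rule zero_le_power)
    have h2: "0 \<le> 2 * \<theta>^k" using th(1) by simp
    have "2 * \<theta>^k * (1 - \<theta>^j) \<le> 2 * \<theta>^k" using h1 h2 by (intro mult_left_le) auto
    moreover have "0 \<le> 1 - \<theta>" using th by simp
    ultimately have "2 * \<theta>^k * (1 - \<theta>^j) / (1-\<theta>) \<le> 2 * \<theta>^k / (1-\<theta>)"
      by (rule divide_right_mono)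
    then show ?thesis using D2[of k j n b] unfolding m by (rule order_trans[rotated])
  qed
  have conv: "convergent (\<lambda>k. F k n b)" for n b
  proof -
    have "Cauchy (\<lambda>k. F k n b)"
    proof (rule metric_CauchyI)
      fix e :: real assume "e > 0"
      obtain N where N: "\<theta>^N < e * (1-\<theta>) / 4"
        using real_arch_pow_inv[of "e * (1-\<theta>) / 4" \<theta>] th \<open>e > 0\<close> by auto
      show "\<exists>M. \<forall>m\<ge>M. \<forall>k\<ge>M. dist (F m n b) (F k n b) < e"
      proof (intro exI allI impI)
        fix m k assume "N \<le> m" "N \<le> k"
        have "\<bar>F m n b - F N n b\<bar> \<le> 2 * \<theta>^N / (1-\<theta>)" "\<bar>F k n b - F N n b\<bar> \<le> 2 * \<theta>^N / (1-\<theta>)"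
          using D3 \<open>N \<le> m\<close> \<open>N \<le> k\<close> by auto
        moreover have "2 * \<theta>^N / (1-\<theta>) < e/2" using N th by (simp add: field_simps)
        ultimately show "dist (F m n b) (F k n b) < e" by (simp add: dist_real_def)
      qed
    qed
    then show ?thesis using Cauchy_convergent_iff by blast
  qed
  define f where "f n b = lim (\<lambda>k. F k n b)" for n b
  have lim: "(\<lambda>k. F k n b) \<longlonglongrightarrow> f n b" for n b
    using conv convergent_LIMSEQ_iff f_def by metis
  have fB: "\<bar>f n b\<bar> \<le> 1" for n b
    by (rule tendsto_upperbound[OF tendsto_rabs[OF lim]]) (use B in auto)
  have fD: "\<bar>f n b - F k n b\<bar> \<le> 2 * \<theta>^k / (1-\<theta>)" for k n b
  proof -
    have "((\<lambda>m. \<bar>F m n b - F k n b\<bar>) \<longlongrightarrow> \<bar>f n b - F k n b\<bar>) sequentially"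
      by (intro tendsto_intros lim)
    then show ?thesis
      by (rule tendsto_upperbound) (use D3 in \<open>auto simp: eventually_sequentially intro!: exI[of _ k]\<close>)
  qed
  have fxp: "Top \<rho> q s f n b = f n b" for n b
  proof -
    have "\<bar>Top \<rho> q s f n b - f n b\<bar> \<le> (4/(1-\<theta>)) * \<theta>^k" for k
    proof -
      have "\<bar>Top \<rho> q s f n b - Top \<rho> q s (F k) n b\<bar> \<le> \<theta> * (2 * \<theta>^k / (1-\<theta>))"
        unfolding \<theta>_def by (rule Top_lip[OF assms fB B fD[unfolded \<theta>_def]])
      moreover have "\<bar>F (Suc k) n b - f n b\<bar> \<le> 2 * \<theta>^(Suc k) / (1-\<theta>)" using fD[of n b "Suc k"] by simp
      moreover have "2 * \<theta>^(Suc k) / (1-\<theta>) \<le> 2 * \<theta>^k / (1-\<theta>)"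
        using th by (intro divide_right_mono) (auto simp: power_le_one mult_left_le_one_le)
      moreover have "\<theta> * (2 * \<theta>^k / (1-\<theta>)) \<le> 2 * \<theta>^k / (1-\<theta>)"
        using th by (intro mult_left_le_one_le) (auto simp: zero_le_power)
      moreover have "\<bar>Top \<rho> q s f n b - f n b\<bar> \<le> \<bar>Top \<rho> q s f n b - Top \<rho> q s (F k) n b\<bar> + \<bar>F (Suc k) n b - f n b\<bar>"
        unfolding Fs by linarith
      moreover have "2 * \<theta>^k / (1-\<theta>) + 2 * \<theta>^k / (1-\<theta>) = (4/(1-\<theta>)) * \<theta>^k" by simp
      ultimately show ?thesis by linarith
    qed
    then have "Top \<rho> q s f n b - f n b = 0" by (intro pow_zero_lemma[OF th]) 
    then show ?thesis by simp
  qed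
  show ?thesis using fxp fB by blast
qed


lemma first_step_iff:
  fixes \<rho> q s :: real
  assumes "\<rho> > 0" "s > 0"
  shows "ps_first_step \<rho> q s f \<longleftrightarrow> (\<forall>n b. Top \<rho> q s f n b = f n b)"
proof -
  have pos: "s + \<rho> + 1 \<noteq> 0" using assms by simp
  have "(s + \<rho> + 1) * y = x \<longleftrightarrow> x / (s+\<rho>+1) = y" for x y :: real
    using pos by (auto simp: field_simps)
  note E = this
  show ?thesis
  proof
    assume H: "ps_first_step \<rho> q s f"
    show "\<forall>n b. Top \<rho> q s f n b = f n b"
    proof (intro allI)
      fix n b show "Top \<rho> q s f n b = f n b"
      proof (cases "b = 0")
        case True then show ?thesis using H by (simp add: Top_def ps_first_step_def)
      next
        case False
        then have "1 \<le> b" by simp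
        then show ?thesis using H False unfolding Top_def ps_first_step_def by (simp add: E)
      qed
    qed
  next
    assume H: "\<forall>n b. Top \<rho> q s f n b = f n b"
    have "f n 0 = 1" for n using H[rule_format, of n 0] by (simp add: Top_def)
    moreover have "(s + \<rho> + 1) * f n b =
          \<rho> * (\<Sum>k. (1 - q) * q ^ k * f (n + k + 1) b)
          + (real b / real (n + b)) * f n (b - 1)
          + (real n / real (n + b)) * f (n - 1) b" if "1 \<le> b" for n b
      using H[rule_format, of n b] that unfolding Top_def by (simp add: E)
    ultimately show "ps_first_step \<rho> q s f" unfolding ps_first_step_def by blast
  qed
qed

lemma estar_props:
  fixes \<rho> q s :: real
  assumes "\<rho> > 0" "0 < q" "q < 1" "s > 0"
  shows "ps_first_step \<rho> q s (estar \<rho> q s)" "\<And>n b. \<bar>estar \<rho> q s n b\<bar> \<le> 1"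
proof -
  obtain f where ff: "\<And>n b. Top \<rho> q s f n b = f n b" and fB: "\<And>n b. \<bar>f n b\<bar> \<le> 1"
    using fixed_point_exists[OF assms] by blast
  define \<theta> where "\<theta> = (\<rho>+1)/(s+\<rho>+1)"
  have th: "0 \<le> \<theta>" "\<theta> < 1" using assms by (auto simp: \<theta>_def)
  have Pf: "ps_first_step \<rho> q s f \<and> (\<exists>M. \<forall>n b. \<bar>f n b\<bar> \<le> M)"
    using first_step_iff[OF assms(1,4)] ff fB by blast
  have uniq: "g = f" if gP: "ps_first_step \<rho> q s g \<and> (\<exists>M. \<forall>n b. \<bar>g n b\<bar> \<le> M)" for g
  proof -
    obtain M where gB: "\<And>n b. \<bar>g n b\<bar> \<le> M" using gP by blast
    have gf: "\<And>n b. Top \<rho> q s g n b = g n b" using gP first_step_iff[OF assms(1,4)] by blast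
    have I: "\<bar>g n b - f n b\<bar> \<le> (M+1) * \<theta>^k" for k n b
    proof (induction k arbitrary: n b)
      case 0 then show ?case using gB[of n b] fB[of n b] by simp
    next
      case (Suc k)
      have "\<bar>Top \<rho> q s g n b - Top \<rho> q s f n b\<bar> \<le> \<theta> * ((M+1) * \<theta>^k)"
        unfolding \<theta>_def by (rule Top_lip[OF assms gB fB Suc.IH[unfolded \<theta>_def]])
      then show ?case unfolding gf ff by (metis mult.left_commute power_Suc)
    qed
    show ?thesis
    proof (intro ext)
      fix n b show "g n b = f n b" using pow_zero_lemma[OF th, of "g n b - f n b" "M+1"] I by simp
    qed
  qed
  have "estar \<rho> q s = f" unfolding estar_def by (rule the_equality[where P="\<lambda>f. ps_first_step \<rho> q s f \<and> (\<exists>M. \<forall>n b. \<bar>f n b\<bar> \<le> M)", OF Pf uniq])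
  then show "ps_first_step \<rho> q s (estar \<rho> q s)" "\<And>n b. \<bar>estar \<rho> q s n b\<bar> \<le> 1"
    using Pf fB by auto
qed



lemma ps_basic:
  fixes c :: "nat \<Rightarrow> complex" and z :: complex
  assumes cM: "\<And>n. norm (c n) \<le> M" and z: "norm z < 1"
  shows "summable (\<lambda>n. c n * z^n)"
proof -
  have M: "0 \<le> M" by (rule order_trans[OF norm_ge_zero cM])
  have "summable (\<lambda>n. M * norm z ^ n)" using z by (intro summable_mult summable_geometric) auto
  moreover have "norm (c n * z^n) \<le> M * norm z ^ n" for n
    using cM[of n] by (simp add: norm_mult norm_power mult_right_mono)
  ultimately show ?thesis by (rule_tac summable_comparison_test[of _ "\<lambda>n. M * norm z ^ n"]) auto
qed

lemma ps_deriv: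
  fixes c :: "nat \<Rightarrow> complex" and z :: complex
  assumes cM: "\<And>n. norm (c n) \<le> M" and z: "norm z < 1"
  shows "((\<lambda>w. \<Sum>n. c n * w^n) has_field_derivative (\<Sum>n. diffs c n * z^n)) (at z)"
  by (rule termdiffs_strong'[of 1]) (use ps_basic[OF cM] z in auto)

lemma ps_nsum:
  fixes c :: "nat \<Rightarrow> complex" and z :: complex
  assumes cM: "\<And>n. norm (c n) \<le> M" and z: "norm z < 1"
  shows "(\<lambda>n. of_nat n * c n * z^n) sums (z * (\<Sum>n. diffs c n * z^n))"
proof -
  have "summable (\<lambda>n. diffs c n * z^n)"
    by (rule termdiff_converges[of z 1]) (use ps_basic[OF cM] z in auto)
  hence "(\<lambda>n. z * (diffs c n * z^n)) sums (z * (\<Sum>n. diffs c n * z^n))"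
    by (intro sums_mult summable_sums)
  moreover have "z * (diffs c n * z^n) = of_nat (Suc n) * c (Suc n) * z^(Suc n)" for n
    by (simp add: diffs_def)
  ultimately have "(\<lambda>n. of_nat (Suc n) * c (Suc n) * z^(Suc n)) sums (z * (\<Sum>n. diffs c n * z^n))"
    by simp
  then show ?thesis using sums_Suc_iff[of "\<lambda>n. of_nat n * c n * z^n"] by simp
qed

lemma geo_wsum2:
  fixes q :: real and d :: "nat \<Rightarrow> real"
  assumes "0 < q" "q < 1" "\<And>k. \<bar>d k\<bar> \<le> 1"
  shows "summable (\<lambda>k. q^k*d k)" "\<bar>\<Sum>k. q^k*d k\<bar> \<le> 1/(1-q)"
proof -
  have g: "(\<lambda>k. q^k) sums (1/(1-q))" using geometric_sums[of q] assms by simp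
  have le: "\<And>k. norm (q^k*d k) \<le> q^k"
    using assms by (auto simp: abs_mult intro!: mult_left_le)
  show s: "summable (\<lambda>k. q^k*d k)"
    by (rule summable_comparison_test[OF _ sums_summable[OF g]]) (use le in auto)
  have s2: "summable (\<lambda>k. \<bar>q^k*d k\<bar>)"
    by (rule summable_comparison_test[OF _ sums_summable[OF g]]) (use le in auto)
  hence "\<bar>\<Sum>k. q^k*d k\<bar> \<le> (\<Sum>k. \<bar>q^k*d k\<bar>)" by (rule summable_rabs)
  also have "\<dots> \<le> (\<Sum>k. q^k)"
    by (rule suminf_le) (use le sums_summable[OF g] s2 in auto)
  also have "\<dots> = 1/(1-q)" using g sums_unique by metis
  finally show "\<bar>\<Sum>k. q^k*d k\<bar> \<le> 1/(1-q)" .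
qed

context
  fixes \<rho> q s :: real
  assumes rho: "\<rho> > 0" and q0: "0 < q" and q1: "q < 1" and s0: "s > 0"
begin

definition "ee b n = estar \<rho> q s n b"
definition "aseq b n = (\<Sum>k. q^k * ee b (n+k+1))"
definition "AA b z = (\<Sum>n. complex_of_real (aseq b n) * z^n)"
definition "ec b n = complex_of_real (ee b n)"
definition "ac b n = complex_of_real (aseq b n)"

lemma ee_bound: "\<bar>ee b n\<bar> \<le> 1"
  using estar_props(2)[OF rho q0 q1 s0] by (simp add: ee_def)

lemma ee_step: "ps_first_step \<rho> q s (estar \<rho> q s)"
  using estar_props(1)[OF rho q0 q1 s0] .

lemma aseq_summable: "summable (\<lambda>k. q^k * ee b (n+k+1))"
  using geo_wsum2(1)[OF q0 q1, of "\<lambda>k. ee b (n+k+1)"] ee_bound by auto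

lemma aseq_bound: "\<bar>aseq b n\<bar> \<le> 1/(1-q)"
  unfolding aseq_def using geo_wsum2(2)[OF q0 q1, of "\<lambda>k. ee b (n+k+1)"] ee_bound by auto

lemma ec_bound: "norm (ec b n) \<le> 1" using ee_bound by (simp add: ec_def)
lemma ac_bound: "norm (ac b n) \<le> 1/(1-q)" using aseq_bound by (simp add: ac_def)

lemma aseq_rec: "aseq b n = ee b (n+1) + q * aseq b (n+1)"
proof -
  have "(\<Sum>k. q^(Suc k) * ee b (n+(Suc k)+1)) = aseq b n - q^0 * ee b (n+0+1)"
    unfolding aseq_def by (rule suminf_split_head[OF aseq_summable])
  moreover have "(\<Sum>k. q^(Suc k) * ee b (n+(Suc k)+1)) = q * aseq b (n+1)"
    unfolding aseq_def using suminf_mult[OF aseq_summable[of b "n+1"], of q]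
    by (simp add: mult.assoc algebra_simps)
  ultimately show ?thesis by simp
qed

lemma first_step_a:
  assumes "1 \<le> b"
  shows "(s + \<rho> + 1) * real (n+b) * ee b n =
     \<rho> * (1-q) * real (n+b) * aseq b n + real b * ee (b-1) n + real n * ee b (n-1)"
proof -
  have pos: "real (n+b) > 0" using assms by simp
  have E: "(s + \<rho> + 1) * ee b n =
          \<rho> * (\<Sum>k. (1 - q) * q ^ k * ee b (n + k + 1))
          + (real b / real (n + b)) * ee (b - 1) n
          + (real n / real (n + b)) * ee b (n - 1)"
  proof -
    have "\<forall>n b. 1 \<le> b \<longrightarrow>
        (s + \<rho> + 1) * estar \<rho> q s n b =
          \<rho> * (\<Sum>k. (1 - q) * q ^ k * estar \<rho> q s (n + k + 1) b)
          + (real b / real (n + b)) * estar \<rho> q s n (b - 1)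
          + (real n / real (n + b)) * estar \<rho> q s (n - 1) b"
      using ee_step unfolding ps_first_step_def by (rule conjunct2)
    from this[rule_format, OF assms] show ?thesis unfolding ee_def .
  qed
  have S: "(\<Sum>k. (1 - q) * q ^ k * ee b (n + k + 1)) = (1-q) * aseq b n"
    unfolding aseq_def using suminf_mult[OF aseq_summable[of b n], of "1-q"] by (simp add: mult.assoc)
  have "(s + \<rho> + 1) * real (n+b) * ee b n = real (n+b) * ((s + \<rho> + 1) * ee b n)" by simp
  also have "\<dots> = real (n+b) * (\<rho> * ((1-q) * aseq b n)
          + (real b / real (n + b)) * ee (b - 1) n
          + (real n / real (n + b)) * ee b (n - 1))" using E S by simp
  also have "\<dots> = \<rho> * (1-q) * real (n+b) * aseq b n + real b * ee (b-1) n + real n * ee b (n-1)"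
  proof -
    have gen: "N \<noteq> 0 \<Longrightarrow> N * (X + B/N*e1 + m/N*e2) = N*X + B*e1 + m*e2" for N X B m e1 e2 :: real
      by (simp add: distrib_left)
    show ?thesis using gen[of "real (n+b)" "\<rho> * ((1-q) * aseq b n)" "real b" "ee (b-1) n" "real n" "ee b (n-1)"] pos
      by simp
  qed
  finally show ?thesis .
qed

lemma EE_eq: "EE \<rho> q s b z = (\<Sum>n. ec b n * z^n)"
  by (simp add: EE_def ec_def ee_def)

lemma AA_eq: "AA b z = (\<Sum>n. ac b n * z^n)"
  by (simp add: AA_def ac_def)

lemma EE_split:
  fixes z :: complex
  assumes z: "norm z < 1"
  shows "EE \<rho> q s b z - ec b 0 = (z - of_real q) * AA b z + of_real q * ac b 0"
proof -
  have E: "(\<lambda>n. ec b n * z^n) sums EE \<rho> q s b z"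
    unfolding EE_eq by (rule summable_sums[OF ps_basic[OF ec_bound z]])
  have A: "(\<lambda>n. ac b n * z^n) sums AA b z"
    unfolding AA_eq by (rule summable_sums[OF ps_basic[OF ac_bound z]])
  have E1: "(\<lambda>n. ec b (Suc n) * z^(Suc n)) sums (EE \<rho> q s b z - ec b 0)"
    using E sums_Suc_iff[of "\<lambda>n. ec b n * z^n"] by simp
  have A1: "(\<lambda>n. ac b (Suc n) * z^(Suc n)) sums (AA b z - ac b 0)"
    using A sums_Suc_iff[of "\<lambda>n. ac b n * z^n"] by simp
  have "(\<lambda>n. ac b n * z^n * z - q * (ac b (Suc n) * z^(Suc n))) sums (AA b z * z - q * (AA b z - ac b 0))"
    by (intro sums_diff sums_mult sums_mult2 A A1)
  moreover have "ac b n * z^n * z - q * (ac b (Suc n) * z^(Suc n)) = ec b (Suc n) * z^(Suc n)" for n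
  proof -
    have "ac b n = ec b (Suc n) + q * ac b (Suc n)"
      using aseq_rec[of b n] by (simp add: ac_def ec_def)
    then show ?thesis by (simp add: algebra_simps)
  qed
  ultimately have "(\<lambda>n. ec b (Suc n) * z^(Suc n)) sums (AA b z * z - q * (AA b z - ac b 0))" by simp
  with E1 have "EE \<rho> q s b z - ec b 0 = AA b z * z - q * (AA b z - ac b 0)" using sums_unique2 by blast
  then show ?thesis by (simp add: algebra_simps)
qed

lemma EE_AA:
  fixes z :: complex
  assumes z: "norm z < 1"
  shows "EE \<rho> q s b z = EE \<rho> q s b (of_real q) + (z - of_real q) * AA b z"
proof -
  have a: "EE \<rho> q s b z - ec b 0 = (z - of_real q) * AA b z + of_real q * ac b 0" by (rule EE_split[OF z])
  have b: "EE \<rho> q s b (of_real q) - ec b 0 = of_real q * ac b 0" using EE_split[of "of_real q" b] q0 q1 by simp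
  from a b show ?thesis by (simp add: algebra_simps)
qed

lemma AA_deriv:
  fixes z :: complex
  assumes z: "norm z < 1"
  shows "(AA b has_field_derivative (\<Sum>n. diffs (ac b) n * z^n)) (at z)"
  unfolding AA_eq[abs_def] by (rule ps_deriv[OF ac_bound z])

lemma EE_deriv:
  fixes z :: complex
  assumes z: "norm z < 1"
  shows "(EE \<rho> q s b has_field_derivative (\<Sum>n. diffs (ec b) n * z^n)) (at z)"
  unfolding EE_eq[abs_def] by (rule ps_deriv[OF ec_bound z])

lemma EE_deriv2:
  fixes z :: complex
  assumes z: "norm z < 1"
  shows "(EE \<rho> q s b has_field_derivative (AA b z + (z - of_real q) * (\<Sum>n. diffs (ac b) n * z^n))) (at z)"
proof -
  have "((\<lambda>w. EE \<rho> q s b (of_real q) + (w - of_real q) * AA b w) has_field_derivative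
      (0 + ((z - of_real q) * (\<Sum>n. diffs (ac b) n * z^n) + (1 - 0) * AA b z))) (at z)"
    by (intro DERIV_add DERIV_const DERIV_mult' AA_deriv[OF z] DERIV_diff DERIV_ident)
  then have "((\<lambda>w. EE \<rho> q s b (of_real q) + (w - of_real q) * AA b w) has_field_derivative
      (AA b z + (z - of_real q) * (\<Sum>n. diffs (ac b) n * z^n))) (at z)" by (simp add: add.commute)
  then show ?thesis
  proof (rule has_field_derivative_transform_within_open[where S="ball 0 1"])
    fix w :: complex assume "w \<in> ball 0 1"
    then show "EE \<rho> q s b (of_real q) + (w - of_real q) * AA b w = EE \<rho> q s b w"
      using EE_AA[of w b] by simp
  qed (use z in auto)
qed

lemma FF_AA:
  fixes z :: complex
  assumes z: "norm z < 1"
  shows "FF \<rho> q s b z = AA b z"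
proof (cases "z = of_real q")
  case True
  have "deriv (EE \<rho> q s b) z = AA b z + (z - of_real q) * (\<Sum>n. diffs (ac b) n * z^n)"
    using EE_deriv2[OF z] by (rule DERIV_imp_deriv)
  then show ?thesis using True by (simp add: FF_def)
next
  case False
  then show ?thesis using EE_AA[OF z] by (simp add: FF_def)
qed

end


lemma alg_ode: fixes z E Eq A Ad E1 Ed S R Q B :: complex
 assumes "Ed = A + (z-Q)*Ad" "E = Eq + (z-Q)*A" "(S+R+1)*(z*Ed) + (S+R+1)*B*E - R*(1-Q)*(z*Ad) - R*(1-Q)*B*A - B*E1 - z*(z*Ed+E) = 0"
 shows "z*(z^2 - (S+1+R+Q)*z + (S*Q+R+Q))*Ad = (z*(S+R+1-z) + ((S+R+1)*B - z)*(z-Q) - R*(1-Q)*B)*A - (B*E1 - (B*(1+R+S) - z)*Eq)"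
proof -
  have "z*(z^2 - (S+1+R+Q)*z + (S*Q+R+Q))*Ad - ((z*(S+R+1-z) + ((S+R+1)*B - z)*(z-Q) - R*(1-Q)*B)*A - (B*E1 - (B*(1+R+S) - z)*Eq))
    = -((S+R+1)*(z*Ed) + (S+R+1)*B*E - R*(1-Q)*(z*Ad) - R*(1-Q)*B*A - B*E1 - z*(z*Ed+E))"
    unfolding assms(1,2) by (simp add: algebra_simps power2_eq_square)
  then show ?thesis using assms(3) by simp
qed

context
  fixes \<rho> q s :: real
  assumes rho: "\<rho> > 0" and q0: "0 < q" and q1: "q < 1" and s0: "s > 0"
begin

lemma AA_ode:
  fixes z :: complex
  assumes b: "1 \<le> b" and z: "norm z < 1"
  defines "S \<equiv> complex_of_real s" and "R \<equiv> complex_of_real \<rho>" and "Q \<equiv> complex_of_real q"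
      and "B \<equiv> (of_nat b :: complex)"
  shows "z*(z^2 - (S+1+R+Q)*z + (S*Q+R+Q)) * (\<Sum>n. diffs (ac \<rho> q s b) n * z^n)
     = (z*(S+R+1-z) + ((S+R+1)*B - z)*(z-Q) - R*(1-Q)*B) * AA \<rho> q s b z
       - (B * EE \<rho> q s (b-1) z - (B*(1+R+S) - z) * EE \<rho> q s b (of_real q))"
proof -
  note props = rho q0 q1 s0
  define Ad where "Ad = (\<Sum>n. diffs (ac \<rho> q s b) n * z^n)"
  define Ed where "Ed = (\<Sum>n. diffs (ec \<rho> q s b) n * z^n)"
  define E where "E = EE \<rho> q s b z"
  define E1 where "E1 = EE \<rho> q s (b-1) z"
  define A where "A = AA \<rho> q s b z"
  define Eq where "Eq = EE \<rho> q s b (of_real q)"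
  have h1: "Ed = A + (z-Q)*Ad"
    using DERIV_unique[OF EE_deriv[OF props z] EE_deriv2[OF props z]]
    by (simp add: Ed_def A_def Ad_def Q_def)
  have h2: "E = Eq + (z-Q)*A" using EE_AA[OF props z] by (simp add: E_def Eq_def A_def Q_def)
  have s1: "(\<lambda>n. of_nat n * ec \<rho> q s b n * z^n) sums (z * Ed)"
    unfolding Ed_def by (rule ps_nsum[OF ec_bound[OF props] z])
  have s2: "(\<lambda>n. ec \<rho> q s b n * z^n) sums E"
    unfolding E_def EE_eq[OF props] by (rule summable_sums[OF ps_basic[OF ec_bound[OF props] z]])
  have s3: "(\<lambda>n. of_nat n * ac \<rho> q s b n * z^n) sums (z * Ad)"
    unfolding Ad_def by (rule ps_nsum[OF ac_bound[OF props] z])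
  have s4: "(\<lambda>n. ac \<rho> q s b n * z^n) sums A"
    unfolding A_def AA_eq[OF props] by (rule summable_sums[OF ps_basic[OF ac_bound[OF props] z]])
  have s5: "(\<lambda>n. ec \<rho> q s (b-1) n * z^n) sums E1"
    unfolding E1_def EE_eq[OF props] by (rule summable_sums[OF ps_basic[OF ec_bound[OF props] z]])
  have s6: "(\<lambda>n. of_nat n * ec \<rho> q s b (n-1) * z^n) sums (z * (z * Ed + E))"
  proof -
    have "(\<lambda>n. z * (of_nat n * ec \<rho> q s b n * z^n + ec \<rho> q s b n * z^n)) sums (z * (z * Ed + E))"
      by (intro sums_mult sums_add s1 s2)
    moreover have "z * (of_nat n * ec \<rho> q s b n * z^n + ec \<rho> q s b n * z^n)
        = of_nat (Suc n) * ec \<rho> q s b (Suc n - 1) * z^(Suc n)" for n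
      by (simp add: algebra_simps)
    ultimately have "(\<lambda>n. of_nat (Suc n) * ec \<rho> q s b (Suc n - 1) * z^(Suc n)) sums (z * (z * Ed + E))"
      by simp
    then show ?thesis using sums_Suc_iff[of "\<lambda>n. of_nat n * ec \<rho> q s b (n-1) * z^n"] by simp
  qed
  define K where "K = S + R + 1"
  define RQ where "RQ = R * (1 - Q)"
  have comb: "(\<lambda>n. K * (of_nat n * ec \<rho> q s b n * z^n) + K * B * (ec \<rho> q s b n * z^n)
      - RQ * (of_nat n * ac \<rho> q s b n * z^n) - RQ * B * (ac \<rho> q s b n * z^n)
      - B * (ec \<rho> q s (b-1) n * z^n) - (of_nat n * ec \<rho> q s b (n-1) * z^n))
     sums (K * (z * Ed) + K * B * E - RQ * (z * Ad) - RQ * B * A - B * E1 - z * (z * Ed + E))"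
    by (intro sums_diff sums_add sums_mult s1 s2 s3 s4 s5 s6)
  have zero: "K * (of_nat n * ec \<rho> q s b n * z^n) + K * B * (ec \<rho> q s b n * z^n)
      - RQ * (of_nat n * ac \<rho> q s b n * z^n) - RQ * B * (ac \<rho> q s b n * z^n)
      - B * (ec \<rho> q s (b-1) n * z^n) - (of_nat n * ec \<rho> q s b (n-1) * z^n) = 0" for n
  proof -
    have r: "(s + \<rho> + 1) * real (n+b) * ee \<rho> q s b n =
       \<rho> * (1-q) * real (n+b) * aseq \<rho> q s b n + real b * ee \<rho> q s (b-1) n + real n * ee \<rho> q s b (n-1)"
      by (rule first_step_a[OF props b])
    have c: "K * (of_nat n + B) * ec \<rho> q s b n =
       RQ * (of_nat n + B) * ac \<rho> q s b n + B * ec \<rho> q s (b-1) n + of_nat n * ec \<rho> q s b (n-1)"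
    proof -
      have "complex_of_real ((s + \<rho> + 1) * real (n+b) * ee \<rho> q s b n) =
        complex_of_real (\<rho> * (1-q) * real (n+b) * aseq \<rho> q s b n + real b * ee \<rho> q s (b-1) n + real n * ee \<rho> q s b (n-1))"
        using r by simp
      then show ?thesis unfolding ec_def[OF props] ac_def[OF props] by (simp add: K_def RQ_def S_def R_def Q_def B_def)
    qed
    have "K * (of_nat n * ec \<rho> q s b n * z^n) + K * B * (ec \<rho> q s b n * z^n)
      - RQ * (of_nat n * ac \<rho> q s b n * z^n) - RQ * B * (ac \<rho> q s b n * z^n)
      - B * (ec \<rho> q s (b-1) n * z^n) - (of_nat n * ec \<rho> q s b (n-1) * z^n)
      = (K * (of_nat n + B) * ec \<rho> q s b n - (RQ * (of_nat n + B) * ac \<rho> q s b n + B * ec \<rho> q s (b-1) n + of_nat n * ec \<rho> q s b (n-1))) * z^n"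
      by (simp add: algebra_simps)
    also have "\<dots> = 0" using c by simp
    finally show ?thesis .
  qed
  have h0: "K * (z * Ed) + K * B * E - RQ * (z * Ad) - RQ * B * A - B * E1 - z * (z * Ed + E) = 0"
    using comb zero sums_unique2[OF comb] sums_zero by (metis (no_types, lifting) ext)
  have "z*(z^2 - (S+1+R+Q)*z + (S*Q+R+Q))*Ad = (z*(S+R+1-z) + ((S+R+1)*B - z)*(z-Q) - R*(1-Q)*B)*A - (B*E1 - (B*(1+R+S) - z)*Eq)"
    by (rule alg_ode[OF h1 h2 h0[unfolded K_def RQ_def]])
  then show ?thesis by (simp add: Ad_def A_def E1_def Eq_def)
qed

end


lemma roots_facts:
  fixes \<rho> q s :: real
  assumes rho: "\<rho> > 0" and q0: "0 < q" and q1: "q < 1" and s0: "s > 0"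
  shows "q < Um \<rho> q s" "Um \<rho> q s < 1" "1 < Up \<rho> q s"
    "Um \<rho> q s + Up \<rho> q s = s + 1 + \<rho> + q" "Um \<rho> q s * Up \<rho> q s = s * q + \<rho> + q"
proof -
  define B0 where "B0 = s + 1 + \<rho> + q"
  define C0 where "C0 = s * q + \<rho> + q"
  define D where "D = B0^2 - 4 * C0"
  have um: "Um \<rho> q s = (B0 - sqrt D)/2" by (simp add: Um_def B0_def C0_def D_def)
  have up: "Up \<rho> q s = (B0 + sqrt D)/2" by (simp add: Up_def B0_def C0_def D_def)
  have d1: "(2 - B0)^2 < D"
  proof -
    have "D - (2 - B0)^2 = 4 * s * (1 - q)" by (simp add: D_def B0_def C0_def power2_eq_square algebra_simps)
    moreover have "4 * s * (1 - q) > 0" using s0 q1 by simp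
    ultimately show ?thesis by linarith
  qed
  have d2: "D < (B0 - 2*q)^2"
  proof -
    have "(B0 - 2*q)^2 - D = 4 * \<rho> * (1 - q)" by (simp add: D_def B0_def C0_def power2_eq_square algebra_simps)
    moreover have "4 * \<rho> * (1 - q) > 0" using rho q1 by simp
    ultimately show ?thesis by linarith
  qed
  have D0: "D \<ge> 0" using d1 by (smt (verit) zero_le_power2)
  have sq1: "\<bar>2 - B0\<bar> < sqrt D" using d1 by (intro real_less_rsqrt) simp
  have pos: "B0 - 2*q > 0" using q1 s0 rho by (simp add: B0_def)
  have sq2: "sqrt D < B0 - 2*q"
  proof -
    have "sqrt D < sqrt ((B0 - 2*q)^2)" using d2 D0 by (simp only: real_sqrt_less_iff)
    also have "\<dots> = B0 - 2*q" using pos by simp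
    finally show ?thesis .
  qed
  show "q < Um \<rho> q s" using sq2 um by simp
  show "Um \<rho> q s < 1" using sq1 um by simp
  show "1 < Up \<rho> q s" using sq1 up by simp
  show "Um \<rho> q s + Up \<rho> q s = s + 1 + \<rho> + q" using um up B0_def by simp
  have "Um \<rho> q s * Up \<rho> q s = (B0^2 - (sqrt D)^2)/4" unfolding um up by (simp add: power2_eq_square algebra_simps)
  also have "\<dots> = C0" using D0 by (simp add: D_def)
  finally show "Um \<rho> q s * Up \<rho> q s = s * q + \<rho> + q" by (simp add: C0_def)
qed

lemma PP_factor:
  fixes \<rho> q s :: real
  assumes rho: "\<rho> > 0" and q0: "0 < q" and q1: "q < 1" and s0: "s > 0"
  shows "PP \<rho> q s z = (z - of_real (Um \<rho> q s)) * (z - of_real (Up \<rho> q s))"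
proof -
  have a: "complex_of_real (s + 1 + \<rho> + q) = of_real (Um \<rho> q s) + of_real (Up \<rho> q s)"
    using roots_facts(4)[OF assms] by (metis of_real_add)
  have b: "complex_of_real (s * q + \<rho> + q) = of_real (Um \<rho> q s) * of_real (Up \<rho> q s)"
    using roots_facts(5)[OF assms] by (metis of_real_mult)
  show ?thesis unfolding PP_def a b by (simp add: algebra_simps power2_eq_square)
qed

lemma C_facts:
  fixes \<rho> q s :: real
  assumes rho: "\<rho> > 0" and q0: "0 < q" and q1: "q < 1" and s0: "s > 0"
  shows "Cminus \<rho> q s - 1 > 0" "Cplus \<rho> q s - 1 < 0"
    "(Cminus \<rho> q s - 1) * (x - Up \<rho> q s) + (Cplus \<rho> q s - 1) * (x - Um \<rho> q s) = q - x"
proof -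
  note r = roots_facts[OF assms]
  have d: "Up \<rho> q s - Um \<rho> q s > 0" using r by simp
  have e1: "Cminus \<rho> q s - 1 = (Um \<rho> q s - q) / (Up \<rho> q s - Um \<rho> q s)"
    using d by (simp add: Cminus_def Cplus_def field_simps)
  have e2: "Cplus \<rho> q s - 1 = - (Up \<rho> q s - q) / (Up \<rho> q s - Um \<rho> q s)"
    using d by (simp add: Cplus_def field_simps)
  show "Cminus \<rho> q s - 1 > 0" using e1 d r by simp
  show "Cplus \<rho> q s - 1 < 0" using e2 d r by (simp add: divide_neg_pos)
  show "(Cminus \<rho> q s - 1) * (x - Up \<rho> q s) + (Cplus \<rho> q s - 1) * (x - Um \<rho> q s) = q - x"
  proof -
    define a where "a = Um \<rho> q s"
    define c where "c = Up \<rho> q s"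
    have dd: "c - a \<noteq> 0" using d by (simp add: a_def c_def)
    have "(a - q) / (c - a) * (x - c) + - (c - q) / (c - a) * (x - a)
        = ((a - q) * (x - c) + (- (c - q)) * (x - a)) / (c - a)"
      by (simp add: add_divide_distrib)
    also have "(a - q) * (x - c) + (- (c - q)) * (x - a) = (c - a) * (q - x)"
      by (simp add: algebra_simps)
    also have "(c - a) * (q - x) / (c - a) = q - x" using dd by simp
    finally show ?thesis unfolding e1 e2 a_def c_def .
  qed
qed

lemma cont_log_deriv:
  fixes L w :: "real \<Rightarrow> complex"
  assumes Lc: "continuous_on S L" and S: "open S" "t \<in> S" and ew: "\<And>x. x \<in> S \<Longrightarrow> exp (L x) = w x"
    and wd: "(w has_vector_derivative w') (at t)"
  shows "(L has_vector_derivative w' / w t) (at t)"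
proof -
  have wt: "w t \<noteq> 0" using ew[OF S(2)] by (metis exp_not_eq_zero)
  have "isCont L t" using Lc S continuous_on_eq_continuous_at by blast
  then obtain d where d: "d > 0" "\<And>x. dist x t < d \<Longrightarrow> dist (L x) (L t) < pi"
    unfolding continuous_at_eps_delta using pi_gt_zero by blast
  define S' where "S' = S \<inter> ball t d"
  have S': "open S'" "t \<in> S'" using S d by (auto simp: S'_def)
  have eq: "L t + Ln (w x / w t) = L x" if "x \<in> S'" for x
  proof -
    have x: "x \<in> S" "dist x t < d" using that by (auto simp: S'_def dist_commute)
    have n: "norm (L x - L t) < pi" using d(2)[OF x(2)] by (simp add: dist_norm)
    have im: "\<bar>Im (L x - L t)\<bar> < pi" using abs_Im_le_cmod[of "L x - L t"] n by linarith
    have "exp (L x - L t) = w x / w t" using ew[OF x(1)] ew[OF S(2)] by (simp add: exp_diff)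
    hence "Ln (w x / w t) = Ln (exp (L x - L t))" by simp
    also have "\<dots> = L x - L t" using im by (intro Ln_exp) auto
    finally show ?thesis by simp
  qed
  have one: "(1::complex) \<notin> \<real>\<^sub>\<le>\<^sub>0" by (simp add: complex_nonpos_Reals_iff)
  have d1: "((\<lambda>x. w x / w t) has_vector_derivative w' / w t) (at t)"
    by (rule has_vector_derivative_divide[OF wd])
  have d2: "((\<lambda>v. L t + Ln v) has_field_derivative (0 + inverse 1)) (at ((\<lambda>x. w x / w t) t))"
  proof -
    have "w t / w t = 1" using wt by simp
    moreover have "((\<lambda>v. L t + Ln v) has_field_derivative (0 + inverse 1)) (at 1)"
      by (intro DERIV_add DERIV_const has_field_derivative_Ln one)
    ultimately show ?thesis by simp
  qed
  have "((\<lambda>v. L t + Ln v) \<circ> (\<lambda>x. w x / w t) has_vector_derivative (w' / w t * (0 + inverse 1))) (at t)"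
    by (rule field_vector_diff_chain_at[OF d1 d2])
  hence "((\<lambda>x. L t + Ln (w x / w t)) has_vector_derivative w' / w t) (at t)" by (simp add: o_def)
  then show ?thesis
    by (rule has_vector_derivative_transform_within_open[OF _ S']) (use eq in auto)
qed

lemma alg_main:
 fixes z z' Er A Ad w B c1 c2 um up Q S R g :: complex
 assumes P: "(z-um)*(z-up) = z^2 - (S+1+R+Q)*z + (S*Q+R+Q)"
   and ode: "z*(z^2 - (S+1+R+Q)*z + (S*Q+R+Q))*Ad = (z*(S+R+1-z) + ((S+R+1)*B - z)*(z-Q) - R*(1-Q)*B)*A - g"
   and cc: "c1*(z-up) + c2*(z-um) = Q - z"
   and nz: "z \<noteq> um" "z \<noteq> up"
 shows "(z*w*((z-um)*(z-up))*A) * ((B*(c1*(z'/(z-um)) + c2*(z'/(z-up)))) * Er)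
    + (z' * ((z*w*((z-um)*(z-up)))*Ad + (z*w*(2*z - (S+1+R+Q)) + B*w*((z-um)*(z-up)))*A)) * Er
    = -(g*Er*w*z')"
proof -
  define X where "X = c1*(z'/(z-um)) + c2*(z'/(z-up))"
  define P2 where "P2 = z^2 - (S+1+R+Q)*z + (S*Q+R+Q)"
  define c where "c = z*(S+R+1-z) + ((S+R+1)*B - z)*(z-Q) - R*(1-Q)*B"
  have k: "((z-um)*(z-up)) * X = z'*(Q-z)"
  proof -
    define y1 where "y1 = z'/(z-um)"
    define y2 where "y2 = z'/(z-up)"
    have a: "(z-um) * y1 = z'" using nz by (simp add: y1_def)
    have b: "(z-up) * y2 = z'" using nz by (simp add: y2_def)
    have "((z-um)*(z-up)) * X = c1*(z-up)*((z-um)*y1) + c2*(z-um)*((z-up)*y2)"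
      by (simp add: X_def y1_def[symmetric] y2_def[symmetric] algebra_simps)
    also have "\<dots> = z'*(c1*(z-up) + c2*(z-um))" unfolding a b by (simp add: algebra_simps)
    finally have "((z-um)*(z-up)) * X = z'*(c1*(z-up) + c2*(z-um))" .
    then show ?thesis using cc by simp
  qed
  have e1: "(z*w*((z-um)*(z-up))*A) * ((B*X) * Er) = z*w*A*B*Er*(((z-um)*(z-up)) * X)"
    by (simp add: mult_ac)
  have e2: "z*w*((z-um)*(z-up))*Ad = w*(c*A - g)"
  proof -
    have "z*w*((z-um)*(z-up))*Ad = w*(z*P2*Ad)" unfolding P P2_def by (simp add: mult_ac)
    then show ?thesis using ode by (simp add: P2_def c_def)
  qed
  have br: "B*z*(Q-z) + c + z*(2*z - (S+1+R+Q)) + B*P2 = 0"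
    by (simp add: c_def P2_def algebra_simps power2_eq_square)
  have "(z*w*((z-um)*(z-up))*A) * ((B*X) * Er)
    + (z' * ((z*w*((z-um)*(z-up)))*Ad + (z*w*(2*z - (S+1+R+Q)) + B*w*((z-um)*(z-up)))*A)) * Er
    = z*w*A*B*Er*(z'*(Q-z)) + (z' * (w*(c*A - g) + (z*w*(2*z - (S+1+R+Q)) + B*w*((z-um)*(z-up)))*A)) * Er"
    unfolding e1 k e2 ..
  also have "\<dots> = z*w*A*B*Er*(z'*(Q-z)) + (z' * (w*(c*A - g) + (z*w*(2*z - (S+1+R+Q)) + B*w*P2)*A)) * Er"
    unfolding P P2_def ..
  also have "\<dots> = w*Er*z'*A*(B*z*(Q-z) + c + z*(2*z - (S+1+R+Q)) + B*P2) - g*Er*w*z'"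
    by (simp add: algebra_simps)
  also have "\<dots> = -(g*Er*w*z')" unfolding br by simp
  finally show ?thesis unfolding X_def .
qed

lemma C_facts_c:
  fixes \<rho> q s :: real and z :: complex
  assumes rho: "\<rho> > 0" and q0: "0 < q" and q1: "q < 1" and s0: "s > 0"
  shows "of_real (Cminus \<rho> q s - 1) * (z - of_real (Up \<rho> q s)) + of_real (Cplus \<rho> q s - 1) * (z - of_real (Um \<rho> q s)) = of_real q - z"
proof -
  define a where "a = Cminus \<rho> q s - 1"
  define c where "c = Cplus \<rho> q s - 1"
  define up where "up = Up \<rho> q s"
  define um where "um = Um \<rho> q s"
  have x0: "a * (0 - up) + c * (0 - um) = q - 0" using C_facts(3)[OF assms, of 0] by (simp add: a_def c_def up_def um_def)
  have x1: "a * (1 - up) + c * (1 - um) = q - 1" using C_facts(3)[OF assms, of 1] by (simp add: a_def c_def up_def um_def)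
  have h2: "a*up + c*um = -q" using x0 by (simp add: algebra_simps)
  have h1: "a + c = -1" using x0 x1 by (simp add: algebra_simps)
  have "of_real a*(z - of_real up) + of_real c*(z - of_real um) = of_real (a+c) * z - of_real (a*up + c*um)"
    by (simp add: algebra_simps)
  also have "\<dots> = of_real q - z" unfolding h1 h2 by simp
  finally show ?thesis by (simp add: a_def c_def up_def um_def)
qed



lemma EE0:
  fixes \<rho> q s :: real and z :: complex
  assumes props: "\<rho> > 0" "0 < q" "q < 1" "s > 0" and z: "norm z < 1"
  shows "EE \<rho> q s 0 z = 1 / (1 - z)"
proof -
  have "estar \<rho> q s n 0 = 1" for n using estar_props(1)[OF props] by (simp add: ps_first_step_def)
  then have "EE \<rho> q s 0 z = (\<Sum>n. z^n)" by (simp add: EE_def)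
  also have "\<dots> = 1 / (1 - z)" using z by (rule suminf_geometric)
  finally show ?thesis .
qed

lemma G_eq:
  fixes \<rho> q s :: real and z :: complex
  assumes props: "\<rho> > 0" "0 < q" "q < 1" "s > 0" and z: "norm z < 1" and b: "1 \<le> b"
  shows "(if b = 1 then 1 / (1 - z) else 0)
                 + (if b \<ge> 2 then of_nat b * EE \<rho> q s (b - 1) z else 0)
                 - (complex_of_real (real b * (1 + \<rho> + s)) - z) * EE \<rho> q s b (complex_of_real q)
       = of_nat b * EE \<rho> q s (b - 1) z - (of_nat b * (1 + of_real \<rho> + of_real s) - z) * EE \<rho> q s b (complex_of_real q)"
proof (cases "b = 1")
  case True
  then show ?thesis using EE0[OF props z] by simp
next
  case False
  then have "b \<ge> 2" using b by simp
  then show ?thesis using False by simp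
qed

lemma AA_cont:
  fixes \<rho> q s :: real
  assumes props: "\<rho> > 0" "0 < q" "q < 1" "s > 0"
  shows "continuous_on (ball 0 1) (AA \<rho> q s b)"
proof (rule DERIV_continuous_on)
  fix x :: complex assume "x \<in> ball 0 1"
  then have "norm x < 1" by simp
  then show "(AA \<rho> q s b has_field_derivative (\<Sum>n. diffs (ac \<rho> q s b) n * x^n)) (at x within ball 0 1)"
    using AA_deriv[OF props] has_field_derivative_at_within by blast
qed



theorem mainTheorem15:
  fixes \<rho> q s :: real and b :: nat and u :: complex
    and \<gamma> :: "real \<Rightarrow> complex" and L :: "real \<Rightarrow> complex"
  assumes "\<rho> > 0" and "0 < q" and "q < 1" and "\<rho> + q < 1" and "s > 0"
    and "b \<ge> 1"
    and "u \<in> ball 0 1" and "u \<noteq> 0"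
    and "valid_path \<gamma>" and "path_image \<gamma> \<subseteq> ball 0 1"
    and "pathstart \<gamma> = u" and "pathfinish \<gamma> = complex_of_real (Um \<rho> q s)"
    and "continuous_on {0..<1} L"
    and "\<forall>t\<in>{0..<1}. exp (L t) = 1 - \<gamma> t / complex_of_real (Um \<rho> q s)"
  shows "((\<lambda>t. ((if b = 1 then 1 / (1 - \<gamma> t) else 0)
                 + (if b \<ge> 2 then of_nat b * EE \<rho> q s (b - 1) (\<gamma> t) else 0)
                 - (complex_of_real (real b * (1 + \<rho> + s)) - \<gamma> t) * EE \<rho> q s b (complex_of_real q))
               * Rratio_pow \<rho> q s b \<gamma> L t * \<gamma> t ^ (b - 1)
               / (u ^ b * PP \<rho> q s u)
               * vector_derivative \<gamma> (at t))
          has_integral FF \<rho> q s b u) {0..1}"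
proof -
  note props = assms(1,2,3,5)
  have b1: "1 \<le> b" using assms(6) .
  define um where "um = Um \<rho> q s"
  define up where "up = Up \<rho> q s"
  have r: "q < um" "um < 1" "1 < up" using roots_facts[OF props] by (auto simp: um_def up_def)
  have um0: "um > 0" using r assms(2) by simp
  define c1 where "c1 = complex_of_real (Cminus \<rho> q s - 1)"
  define c2 where "c2 = complex_of_real (Cplus \<rho> q s - 1)"
  define Lp where "Lp t = Ln (1 - \<gamma> t / complex_of_real up)" for t
  define Ex where "Ex t = of_nat b * (c1 * (L t - L 0) + c2 * (Lp t - Lp 0))" for t
  have Rr_eq: "Rratio_pow \<rho> q s b \<gamma> L t = exp (Ex t)" for t
    by (simp add: Rratio_pow_def Ex_def Lp_def c1_def c2_def up_def)
  define H where "H z = z^b * PP \<rho> q s z * AA \<rho> q s b z" for z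
  define \<Phi> where "\<Phi> t = H (\<gamma> t) * exp (Ex t)" for t
  define K0 where "K0 = u^b * PP \<rho> q s u"
  define G where "G z = (if b = 1 then 1 / (1 - z) else 0)
                 + (if b \<ge> 2 then of_nat b * EE \<rho> q s (b - 1) z else 0)
                 - (complex_of_real (real b * (1 + \<rho> + s)) - z) * EE \<rho> q s b (complex_of_real q)" for z
  define f' where "f' t = G (\<gamma> t) * Rratio_pow \<rho> q s b \<gamma> L t * \<gamma> t ^ (b - 1) / K0 * vector_derivative \<gamma> (at t)" for t
  define \<Psi> where "\<Psi> t = - \<Phi> t / K0" for t

  have gcont: "continuous_on {0..1} \<gamma>" using assms(9) valid_path_imp_path path_def by blast
  obtain S where S: "finite S" "\<gamma> C1_differentiable_on {0..1} - S"
    using assms(9) unfolding valid_path_def piecewise_C1_differentiable_on_def by blast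
  obtain D where D: "\<And>x. x \<in> {0..1} - S \<Longrightarrow> (\<gamma> has_vector_derivative D x) (at x)"
    using S(2) unfolding C1_differentiable_on_def by blast
  have gin: "norm (\<gamma> t) < 1" if "t \<in> {0..1}" for t
  proof -
    have "\<gamma> t \<in> path_image \<gamma>" using that unfolding path_image_def by simp
    then have "\<gamma> t \<in> ball 0 1" using assms(10) by blast
    then show ?thesis by simp
  qed
  have g0: "\<gamma> 0 = u" using assms(11) by (simp add: pathstart_def)
  have g1: "\<gamma> 1 = of_real um" using assms(12) by (simp add: pathfinish_def um_def)
  have Lexp: "exp (L t) = 1 - \<gamma> t / of_real um" if "t \<in> {0..<1}" for t
    using assms(14) that by (simp add: um_def)
  have gnum: "\<gamma> t \<noteq> of_real um" if "t \<in> {0..<1}" for t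
  proof
    assume "\<gamma> t = of_real um"
    then have "exp (L t) = 0" using Lexp[OF that] um0 by simp
    then show False by simp
  qed
  have reup: "Re (1 - \<gamma> t / of_real up) > 0" if "t \<in> {0..1}" for t
  proof -
    have "\<bar>Re (\<gamma> t)\<bar> < 1" using gin[OF that] abs_Re_le_cmod[of "\<gamma> t"] by linarith
    then have "Re (\<gamma> t) / up < 1" using r by (simp add: field_simps)
    then show ?thesis by simp
  qed
  have nonpos: "1 - \<gamma> t / of_real up \<notin> \<real>\<^sub>\<le>\<^sub>0" if "t \<in> {0..1}" for t
    using reup[OF that] by (simp add: complex_nonpos_Reals_iff)
  have gnup: "\<gamma> t \<noteq> of_real up" if "t \<in> {0..1}" for t
    using gin[OF that] r by auto
  have PPf: "PP \<rho> q s z = (z - of_real um) * (z - of_real up)" for z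
    using PP_factor[OF props] by (simp add: um_def up_def)

  have dPP: "(PP \<rho> q s has_field_derivative (2*z - of_real (s + 1 + \<rho> + q))) (at z)" for z
  proof -
    have e: "PP \<rho> q s = (\<lambda>z. z^2 - of_real (s + 1 + \<rho> + q) * z + of_real (s * q + \<rho> + q))"
      by (rule ext) (simp add: PP_def)
    show ?thesis unfolding e by (auto intro!: derivative_eq_intros)
  qed
  define Ad where "Ad z = (\<Sum>n. diffs (ac \<rho> q s b) n * z^n)" for z
  define H' where "H' z = z^b * PP \<rho> q s z * Ad z + (z^b * (2*z - of_real (s + 1 + \<rho> + q)) + of_nat b * z^(b-1) * PP \<rho> q s z) * AA \<rho> q s b z" for z
  have dH: "(H has_field_derivative H' z) (at z)" if "norm z < 1" for z
  proof -
    have dpow: "((\<lambda>x. x^b) has_field_derivative of_nat b * z^(b-1)) (at z)"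
      using DERIV_power[OF DERIV_ident, of b z UNIV] by simp
    have "((\<lambda>z. z^b * PP \<rho> q s z * AA \<rho> q s b z) has_field_derivative H' z) (at z)"
      unfolding H'_def Ad_def
      by (intro DERIV_mult' dpow dPP AA_deriv[OF props that])
    then show ?thesis by (simp add: H_def[abs_def])
  qed

  have dPhi: "(\<Phi> has_vector_derivative (- (G (\<gamma> t) * exp (Ex t) * \<gamma> t ^ (b-1) * D t))) (at t)"
    if t: "t \<in> {0<..<1} - S" for t
  proof -
    define z where "z = \<gamma> t"
    define z' where "z' = D t"
    have t01: "t \<in> {0..1}" "t \<in> {0..<1}" using t by auto
    have dg: "(\<gamma> has_vector_derivative z') (at t)" unfolding z'_def using D t by auto
    have zin: "norm z < 1" using gin t01 by (simp add: z_def)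
    have zum: "z \<noteq> of_real um" using gnum t01 by (simp add: z_def)
    have zup: "z \<noteq> of_real up" using gnup t01 by (simp add: z_def)
    have dw: "((\<lambda>t. 1 - \<gamma> t / of_real um) has_vector_derivative (0 - z' / of_real um)) (at t)"
      by (intro has_vector_derivative_diff has_vector_derivative_const has_vector_derivative_divide dg)
    have dL0: "(L has_vector_derivative (0 - z' / of_real um) / (1 - \<gamma> t / of_real um)) (at t)"
      by (rule cont_log_deriv[OF continuous_on_subset[OF assms(13)] _ _ _ dw, of "{0<..<1}"])
         (use t Lexp in auto)
    have e1: "(0 - z' / of_real um) / (1 - \<gamma> t / of_real um) = z' / (z - of_real um)"
      using zum um0 by (simp add: z_def field_simps)
    have dL: "(L has_vector_derivative z' / (z - of_real um)) (at t)" using dL0 e1 by simp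
    have dLn: "((\<lambda>v. Ln (1 - v / of_real up)) has_field_derivative (inverse (1 - z / of_real up) * (0 - 1 / of_real up))) (at z)"
    proof (rule DERIV_chain2[of Ln])
      show "(Ln has_field_derivative inverse (1 - z / of_real up)) (at (1 - z / of_real up))"
        using nonpos[OF t01(1)] by (intro has_field_derivative_Ln) (simp add: z_def)
      show "((\<lambda>v. 1 - v / of_real up) has_field_derivative (0 - 1 / of_real up)) (at z)"
        by (intro DERIV_diff DERIV_const DERIV_cdivide DERIV_ident)
    qed
    have dLp0: "(((\<lambda>v. Ln (1 - v / of_real up)) \<circ> \<gamma>) has_vector_derivative (z' * (inverse (1 - z / of_real up) * (0 - 1 / of_real up)))) (at t)"
      using field_vector_diff_chain_at[OF dg dLn[unfolded z_def]] unfolding z_def .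
    have e2: "z' * (inverse (1 - z / of_real up) * (0 - 1 / of_real up)) = z' / (z - of_real up)"
      using zup r by (simp add: field_simps)
    have dLp: "(Lp has_vector_derivative z' / (z - of_real up)) (at t)"
      using dLp0 e2 by (simp add: Lp_def[abs_def] o_def)
    define Ex' where "Ex' = of_nat b * (c1 * (z' / (z - of_real um) - 0) + c2 * (z' / (z - of_real up) - 0))"
    have dEx: "(Ex has_vector_derivative Ex') (at t)"
      unfolding Ex_def[abs_def] Ex'_def
      by (intro has_vector_derivative_mult_right has_vector_derivative_add has_vector_derivative_diff
          has_vector_derivative_const dL dLp)
    have dR: "((exp \<circ> Ex) has_vector_derivative (Ex' * exp (Ex t))) (at t)"
      by (rule field_vector_diff_chain_at[OF dEx DERIV_exp])
    have dHg: "((H \<circ> \<gamma>) has_vector_derivative (z' * H' z)) (at t)"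
      using field_vector_diff_chain_at[OF dg dH[OF zin, unfolded z_def]] unfolding z_def .
    have dP0: "((\<lambda>t. (H \<circ> \<gamma>) t * (exp \<circ> Ex) t) has_vector_derivative
        ((H \<circ> \<gamma>) t * (Ex' * exp (Ex t)) + (z' * H' z) * (exp \<circ> Ex) t)) (at t)"
      by (rule has_vector_derivative_mult[OF dHg dR])
    have val: "(H \<circ> \<gamma>) t * (Ex' * exp (Ex t)) + (z' * H' z) * (exp \<circ> Ex) t
        = - (G (\<gamma> t) * exp (Ex t) * \<gamma> t ^ (b-1) * D t)"
    proof -
      define w where "w = z^(b-1)"
      have zb: "z^b = z * w" using b1 by (simp add: w_def power_eq_if)
      define Q where "Q = complex_of_real q"
      define S' where "S' = complex_of_real s"
      define R where "R = complex_of_real \<rho>"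
      define B where "B = (of_nat b :: complex)"
      have Pf2: "(z - of_real um) * (z - of_real up) = z^2 - (S'+1+R+Q)*z + (S'*Q+R+Q)"
        using PPf[of z] by (simp add: PP_def S'_def R_def Q_def)
      have ode: "z*(z^2 - (S'+1+R+Q)*z + (S'*Q+R+Q)) * Ad z
         = (z*(S'+R+1-z) + ((S'+R+1)*B - z)*(z-Q) - R*(1-Q)*B) * AA \<rho> q s b z - G z"
        using AA_ode[OF props b1 zin] G_eq[OF props zin b1]
        by (simp add: Ad_def G_def S'_def R_def Q_def B_def)
      have cc: "c1*(z - of_real up) + c2*(z - of_real um) = Q - z"
        using C_facts_c[OF props, of z] by (simp add: c1_def c2_def up_def um_def Q_def)
      have main: "(z*w*((z-of_real um)*(z-of_real up))*AA \<rho> q s b z) * ((B*(c1*(z'/(z-of_real um)) + c2*(z'/(z-of_real up)))) * exp (Ex t))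
        + (z' * ((z*w*((z-of_real um)*(z-of_real up)))*Ad z + (z*w*(2*z - (S'+1+R+Q)) + B*w*((z-of_real um)*(z-of_real up)))*AA \<rho> q s b z)) * exp (Ex t)
        = -(G z*exp (Ex t)*w*z')"
        by (rule alg_main[OF Pf2 ode cc zum zup])
      have "(H \<circ> \<gamma>) t * (Ex' * exp (Ex t)) + (z' * H' z) * (exp \<circ> Ex) t
        = (z*w*((z-of_real um)*(z-of_real up))*AA \<rho> q s b z) * ((B*(c1*(z'/(z-of_real um)) + c2*(z'/(z-of_real up)))) * exp (Ex t))
        + (z' * ((z*w*((z-of_real um)*(z-of_real up)))*Ad z + (z*w*(2*z - (S'+1+R+Q)) + B*w*((z-of_real um)*(z-of_real up)))*AA \<rho> q s b z)) * exp (Ex t)"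
        unfolding H_def H'_def Ex'_def o_def z_def[symmetric] PPf[symmetric] zb w_def[symmetric]
        by (simp add: S'_def R_def Q_def B_def)
      also have "\<dots> = -(G z*exp (Ex t)*w*z')" by (rule main)
      finally show ?thesis by (simp add: z_def w_def z'_def)
    qed
    have "\<Phi> = (\<lambda>t. (H \<circ> \<gamma>) t * (exp \<circ> Ex) t)" by (rule ext) (simp add: \<Phi>_def)
    then show ?thesis using dP0 val by simp
  qed
  have Hcont: "continuous_on (ball 0 1) H"
  proof (rule DERIV_continuous_on)
    fix x :: complex assume "x \<in> ball 0 1"
    then show "(H has_field_derivative H' x) (at x within ball 0 1)"
      using dH[of x] has_field_derivative_at_within by simp
  qed
  have gimg: "\<gamma> ` {0..1} \<subseteq> ball 0 1" using gin by auto
  have Hg_cont: "continuous_on {0..1} (\<lambda>t. H (\<gamma> t))"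
    by (rule continuous_on_compose2[OF Hcont gcont gimg])
  have Ag_cont: "continuous_on {0..1} (\<lambda>t. AA \<rho> q s b (\<gamma> t))"
    by (rule continuous_on_compose2[OF AA_cont[OF props] gcont gimg])
  have Lpcont: "continuous_on {0..1} Lp"
    unfolding Lp_def[abs_def]
    by (intro continuous_on_Ln' continuous_intros gcont nonpos) (use r in auto)
  have Excont: "continuous_on {0..<1} Ex"
    unfolding Ex_def[abs_def]
    by (intro continuous_intros continuous_on_subset[OF Lpcont] assms(13)) auto
  have Phicont0: "continuous_on {0..<1} \<Phi>"
    unfolding \<Phi>_def[abs_def]
    by (intro continuous_intros continuous_on_subset[OF Hg_cont] Excont) auto
  obtain KA where KA: "KA > 0" "\<And>t. t \<in> {0..1} \<Longrightarrow> norm (AA \<rho> q s b (\<gamma> t)) \<le> KA"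
  proof -
    have "compact ((\<lambda>t. AA \<rho> q s b (\<gamma> t)) ` {0..1})"
      by (rule compact_continuous_image[OF Ag_cont compact_Icc])
    then have "bounded ((\<lambda>t. AA \<rho> q s b (\<gamma> t)) ` {0..1})" by (rule compact_imp_bounded)
    then show ?thesis using that unfolding bounded_pos by auto
  qed
  define Cm where "Cm = Cminus \<rho> q s - 1"
  define Cp where "Cp = Cplus \<rho> q s - 1"
  have Cm: "Cm > 0" and Cp: "Cp < 0" using C_facts(1,2)[OF props] by (auto simp: Cm_def Cp_def)
  define ME where "ME = real b * (Cm * (ln (1 + 1/um) - Re (L 0)) + Cp * (ln (1 - 1/up) - Re (Lp 0)))"
  have REx: "Re (Ex t) \<le> ME" if t: "t \<in> {0..<1}" for t
  proof -
    have t1: "t \<in> {0..1}" using t by auto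
    have e: "Re (Ex t) = real b * (Cm * (Re (L t) - Re (L 0)) + Cp * (Re (Lp t) - Re (Lp 0)))"
      by (simp add: Ex_def c1_def c2_def Cm_def Cp_def)
    have wpos: "norm (1 - \<gamma> t / of_real um) > 0" using gnum[OF t] um0 by (simp add: field_simps)
    have ReL: "Re (L t) = ln (norm (1 - \<gamma> t / of_real um))"
    proof -
      have "exp (Re (L t)) = norm (1 - \<gamma> t / of_real um)" using Lexp[OF t] by (metis norm_exp_eq_Re)
      then show ?thesis by (metis ln_exp)
    qed
    have wle: "norm (1 - \<gamma> t / of_real um) \<le> 1 + 1/um"
    proof -
      have "norm (1 - \<gamma> t / of_real um) \<le> norm (1::complex) + norm (\<gamma> t / of_real um)" by (rule norm_triangle_ineq4)
      also have "norm (\<gamma> t / of_real um) = norm (\<gamma> t) / um" using um0 by (simp add: norm_divide)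
      also have "norm (\<gamma> t) / um \<le> 1 / um" using gin[OF t1] um0 by (simp add: divide_right_mono)
      finally show ?thesis by simp
    qed
    have p1: "0 < 1 + 1/um" using um0 by (intro add_pos_pos) auto
    have L1: "Re (L t) \<le> ln (1 + 1/um)" unfolding ReL using ln_le_cancel_iff[OF wpos p1] wle by blast
    have vpos: "1 - 1/up > 0" using r by simp
    have vge: "norm (1 - \<gamma> t / of_real up) \<ge> 1 - 1/up"
    proof -
      have "norm (1::complex) - norm (\<gamma> t / of_real up) \<le> norm (1 - \<gamma> t / of_real up)" by (rule norm_triangle_ineq2)
      moreover have "norm (\<gamma> t / of_real up) = norm (\<gamma> t) / up" using r by (simp add: norm_divide)
      moreover have "norm (\<gamma> t) / up \<le> 1 / up" using gin[OF t1] r by (simp add: divide_right_mono)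
      ultimately show ?thesis by simp
    qed
    have ReLp: "Re (Lp t) = ln (norm (1 - \<gamma> t / of_real up))"
      unfolding Lp_def using nonpos[OF t1] by (intro Re_Ln) auto
    have p2: "0 < norm (1 - \<gamma> t / of_real up)" using vpos vge by linarith
    have L2: "Re (Lp t) \<ge> ln (1 - 1/up)" unfolding ReLp using ln_le_cancel_iff[OF vpos p2] vge by blast
    have "Cm * (Re (L t) - Re (L 0)) \<le> Cm * (ln (1 + 1/um) - Re (L 0))"
      using Cm L1 by (intro mult_left_mono) auto
    moreover have "Cp * (Re (Lp t) - Re (Lp 0)) \<le> Cp * (ln (1 - 1/up) - Re (Lp 0))"
      using Cp L2 by (intro mult_left_mono_neg) auto
    ultimately show ?thesis unfolding e ME_def by (intro mult_left_mono) auto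
  qed
  have Phibound: "norm (\<Phi> t) \<le> KA * exp ME * norm (PP \<rho> q s (\<gamma> t))" if t: "t \<in> {0..<1}" for t
  proof -
    have t1: "t \<in> {0..1}" using t by auto
    have a: "norm (\<gamma> t ^ b) \<le> 1" using gin[OF t1] by (simp add: norm_power power_le_one)
    have c: "norm (exp (Ex t)) \<le> exp ME" using REx[OF t] by simp
    have "norm (\<Phi> t) = norm (\<gamma> t ^ b) * norm (PP \<rho> q s (\<gamma> t)) * norm (AA \<rho> q s b (\<gamma> t)) * norm (exp (Ex t))"
      by (simp add: \<Phi>_def H_def norm_mult)
    also have "\<dots> \<le> 1 * norm (PP \<rho> q s (\<gamma> t)) * KA * exp ME"
      by (intro mult_mono a KA(2)[OF t1] c order_refl) (use KA(1) in auto)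
    finally show ?thesis by (simp add: mult_ac)
  qed
  have PPum: "PP \<rho> q s (of_real um) = 0" using PPf by simp
  have Phi1: "\<Phi> 1 = 0" by (simp add: \<Phi>_def H_def g1 PPum)
  have Phicont: "continuous_on {0..1} \<Phi>"
    unfolding continuous_on_eq_continuous_within
  proof
    fix x :: real assume x: "x \<in> {0..1}"
    show "continuous (at x within {0..1}) \<Phi>"
    proof (cases "x < 1")
      case True
      have "at x within {0..1} = at x within {0..<1}"
        by (rule at_within_nhd[of x "{..<1}"]) (use True in auto)
      moreover have "continuous (at x within {0..<1}) \<Phi>"
        using Phicont0 True x unfolding continuous_on_eq_continuous_within by auto
      ultimately show ?thesis by (simp add: continuous_within)
    next
      case False
      then have x1: "x = 1" using x by simp
      have lim0: "((\<lambda>t. KA * exp ME * norm (PP \<rho> q s (\<gamma> t))) \<longlongrightarrow> KA * exp ME * norm (PP \<rho> q s (\<gamma> 1))) (at 1 within {0..1})"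
      proof -
        have "continuous (at 1 within {0..1}) \<gamma>" using gcont unfolding continuous_on_eq_continuous_within by auto
        then have "(\<gamma> \<longlongrightarrow> \<gamma> 1) (at 1 within {0..1})" by (simp add: continuous_within)
        then show ?thesis unfolding PP_def by (intro tendsto_intros)
      qed
      have lim: "((\<lambda>t. KA * exp ME * norm (PP \<rho> q s (\<gamma> t))) \<longlongrightarrow> 0) (at 1 within {0..1})"
        using lim0 by (simp add: g1 PPum)
      have ev: "eventually (\<lambda>t. norm (\<Phi> t) \<le> KA * exp ME * norm (PP \<rho> q s (\<gamma> t))) (at 1 within {0..1})"
        unfolding eventually_at_filter by (intro always_eventually allI impI) (auto intro!: Phibound)
      have "(\<Phi> \<longlongrightarrow> 0) (at 1 within {0..1})" by (rule Lim_null_comparison[OF ev lim])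
      then show ?thesis unfolding x1 continuous_within Phi1 .
    qed
  qed
  have u_um: "u \<noteq> of_real um" using gnum[of 0] g0 by simp
  have u_up: "u \<noteq> of_real up" using gnup[of 0] g0 by simp
  have K0nz: "K0 \<noteq> 0" unfolding K0_def PPf using u_um u_up assms(8) by simp
  have Psicont: "continuous_on {0..1} \<Psi>"
    unfolding \<Psi>_def[abs_def] by (intro continuous_intros Phicont) (use K0nz in auto)
  have dPsi: "(\<Psi> has_vector_derivative f' x) (at x)" if x: "x \<in> {0<..<1} - S" for x
  proof -
    have x1: "x \<in> {0..1} - S" using x by auto
    have "((\<lambda>t. - \<Phi> t / K0) has_vector_derivative (- (- (G (\<gamma> x) * exp (Ex x) * \<gamma> x ^ (b-1) * D x)) / K0)) (at x)"
      by (intro has_vector_derivative_divide has_vector_derivative_minus dPhi[OF x])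
    moreover have "vector_derivative \<gamma> (at x) = D x" by (rule vector_derivative_at[OF D[OF x1]])
    ultimately show ?thesis unfolding \<Psi>_def[abs_def] f'_def Rr_eq by (simp add: mult_ac)
  qed
  have I: "(f' has_integral (\<Psi> 1 - \<Psi> 0)) {0..1}"
    by (rule fundamental_theorem_of_calculus_interior_strong[OF S(1) _ dPsi Psicont]) auto
  have Ex0: "Ex 0 = 0" by (simp add: Ex_def)
  have uin: "norm u < 1" using assms(7) by simp
  have "\<Psi> 1 - \<Psi> 0 = \<Phi> 0 / K0" by (simp add: \<Psi>_def Phi1)
  also have "\<Phi> 0 = H u" by (simp add: \<Phi>_def g0 Ex0)
  also have "H u = K0 * AA \<rho> q s b u" by (simp add: H_def K0_def)
  also have "K0 * AA \<rho> q s b u / K0 = AA \<rho> q s b u" using K0nz by simp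
  also have "\<dots> = FF \<rho> q s b u" using FF_AA[OF props uin] by simp
  finally have "(f' has_integral FF \<rho> q s b u) {0..1}" using I by simp
  then show ?thesis unfolding f'_def[abs_def] G_def K0_def .
qed


end
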